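(* Let $p\in J$. The value of the linear program (LP): maximize $\pi_1(\Omega)$ over pairs $(\pi_1,\pi_2)\in\mathrm{cone}(\mathcal{E})\times\mathrm{cone}(\Omega^-)$ with $\pi_1+\pi_2=p$, equals the value of the program (LP'): maximize $\pi(\Omega)$ over $\pi\in\mathrm{cone}(\Omega)$ with $\pi\le p$ (coordinatewise) and $\sum_{\omega\in\Omega}\pi(\omega)r(\omega)\ge0$.
   Context: $\Omega$ is a finite set, $r:\Omega\to\mathbb{R}$; each $\omega$ is identified with a unit vector of $\mathbb{R}^\Omega$ and $\Delta(\Omega)$ with the unit simplex. $J=\{p\in\Delta(\Omega):\sum_\omega p(\omega)r(\omega)<0\}$, $\mathcal{F}=\{p\in\Delta(\Omega):\sum_\omega p(\omega)r(\omega)=0\}$, $\mathcal{E}$ is the set of extreme points of $\mathcal{F}$, $\Omega^-=\{\omega:r(\omega)<0\}$. For a finite set $A\subset\mathbb{R}^\Omega$, $\mathrm{cone}(A)$ is the closed convex hull of $A\cup\{0\}$; for $\pi\in\mathbb{R}^\Omega$, $\pi(\Omega)=\sum_\omega\pi(\omega)$. *)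

theory Defs
  imports "HOL-Analysis.Analysis"
begin

text \<open>Omega is the finite index type 'n; R^Omega is real^'n; the state w is the unit vector axis w 1.\<close>

definition total :: "real^'n \<Rightarrow> real" where
  "total \<pi> = (\<Sum>w\<in>UNIV. \<pi> $ w)"

definition expect :: "('n \<Rightarrow> real) \<Rightarrow> real^'n \<Rightarrow> real" where
  "expect r p = (\<Sum>w\<in>UNIV. p $ w * r w)"

definition prob_simplex :: "(real^'n) set" where
  "prob_simplex = {p. (\<forall>w. 0 \<le> p $ w) \<and> total p = 1}"

definition Jset :: "('n \<Rightarrow> real) \<Rightarrow> (real^'n) set" where
  "Jset r = {p \<in> prob_simplex. expect r p < 0}"

definition Fset :: "('n \<Rightarrow> real) \<Rightarrow> (real^'n) set" where
  "Fset r = {p \<in> prob_simplex. expect r p = 0}"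

definition Eset :: "('n \<Rightarrow> real) \<Rightarrow> (real^'n) set" where
  "Eset r = {x. x extreme_point_of (Fset r)}"

definition Omega_minus :: "('n \<Rightarrow> real) \<Rightarrow> (real^'n) set" where
  "Omega_minus r = {axis w 1 | w. r w < 0}"

definition pcone :: "(real^'n) set \<Rightarrow> (real^'n) set" where
  "pcone A = closure (convex hull (insert 0 A))"

end

theory Submission
  imports Defs
begin

lemma total_inner: "total (x::real^'n::finite) = (\<chi> w. 1) \<bullet> x"
  by (simp add: total_def inner_vec_def)

lemma expect_inner: "expect r (x::real^'n::finite) = (\<chi> w. r w) \<bullet> x"
  by (simp add: expect_def inner_vec_def mult.commute)

lemma comp_inner: "(x::real^'n::finite) $ w = axis w 1 \<bullet> x"
  by (simp add: inner_axis')

lemma in_hull_axes: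
  fixes y :: "real^'n::finite"
  assumes nn: "\<forall>w. 0 \<le> y$w" and out: "\<forall>w. w \<notin> W \<longrightarrow> y$w = 0" and t: "total y \<le> 1"
  shows "y \<in> convex hull (insert 0 ((\<lambda>w. axis w 1) ` W))"
proof (cases "total y = 0")
  case True
  then have "\<forall>w\<in>UNIV. y$w = 0" using nn
    by (simp add: total_def sum_nonneg_eq_0_iff)
  then have "y = 0" by (simp add: vec_eq_iff)
  then show ?thesis by (simp add: hull_inc)
next
  case False
  define s where "s = total y"
  have spos: "s > 0" using False nn unfolding s_def total_def
    by (metis order_le_less sum_nonneg)
  have tW: "total y = (\<Sum>w\<in>W. y$w)"
    unfolding total_def
    by (rule sum.mono_neutral_right) (use out in auto)
  define z where "z = (\<Sum>w\<in>W. (y$w / s) *\<^sub>R axis w (1::real))"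
  have z: "z \<in> convex hull ((\<lambda>w. axis w 1) ` W)"
    unfolding z_def
  proof (rule convex_sum)
    show "finite W" by simp
    show "convex (convex hull ((\<lambda>w. axis w 1) ` W))" by simp
    show "(\<Sum>i\<in>W. y $ i / s) = 1" using tW spos s_def by (simp add: sum_divide_distrib[symmetric])
    show "\<And>i. i \<in> W \<Longrightarrow> 0 \<le> y $ i / s" using nn spos by simp
    show "\<And>i. i \<in> W \<Longrightarrow> axis i 1 \<in> convex hull ((\<lambda>w. axis w 1) ` W)"
      by (simp add: hull_inc)
  qed
  have yz: "y = s *\<^sub>R z + (1 - s) *\<^sub>R 0"
  proof -
    have "\<And>i. s * (\<Sum>w\<in>W. y $ w / s * axis w 1 $ i) = y $ i"
    proof -
      fix i
      have "(\<Sum>w\<in>W. y $ w / s * axis w 1 $ i) = (\<Sum>w\<in>W. if w = i then y $ i / s else 0)"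
        by (rule sum.cong) (auto simp: axis_def)
      also have "\<dots> = (if i \<in> W then y$i / s else 0)" by simp
      finally show "s * (\<Sum>w\<in>W. y $ w / s * axis w 1 $ i) = y $ i"
        using spos out by auto
    qed
    then show ?thesis by (simp add: z_def vec_eq_iff)
  qed
  show ?thesis
    apply (subst yz)
    apply (rule convexD[OF convex_convex_hull])
    using z hull_mono[of "(\<lambda>w. axis w 1) ` W" "insert 0 ((\<lambda>w. axis w 1) ` W)"]
    using spos t s_def by (auto simp: hull_inc)
qed

definition Good :: "('n::finite \<Rightarrow> real) \<Rightarrow> (real^'n) set" where
  "Good r = {x. (\<chi> w. r w) \<bullet> x = 0} \<inter> {x. (\<chi> w. 1) \<bullet> x \<le> 1} \<inter> (\<Inter>w. {x. axis w 1 \<bullet> x \<ge> 0})"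

lemma Good_closed: "closed (Good r)"
  unfolding Good_def
  by (intro closed_Int closed_INT closed_hyperplane closed_halfspace_le ballI closed_halfspace_ge)

lemma Good_convex: "convex (Good r)"
  unfolding Good_def
  by (intro convex_Int convex_INT convex_hyperplane convex_halfspace_le convex_halfspace_ge)

lemma Good_iff: "x \<in> Good r \<longleftrightarrow> expect r x = 0 \<and> total x \<le> 1 \<and> (\<forall>w. x$w \<ge> 0)"
  unfolding Good_def by (simp add: expect_inner total_inner comp_inner)

lemma pcone_E: "pcone (Eset r) \<subseteq> Good r"
  unfolding pcone_def
proof (rule closure_minimal[OF _ Good_closed], rule hull_minimal)
  show "insert 0 (Eset r) \<subseteq> Good r"
  proof
    fix x assume "x \<in> insert 0 (Eset r)"
    then show "x \<in> Good r"
    proof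
      assume "x = 0" then show ?thesis by (simp add: Good_iff expect_def total_def)
    next
      assume "x \<in> Eset r"
      then have "x \<in> Fset r" by (simp add: Eset_def extreme_point_of_def)
      then show ?thesis by (simp add: Good_iff Fset_def prob_simplex_def)
    qed
  qed
  show "convex (Good r)" by (rule Good_convex)
qed

definition Pos :: "(real^'n::finite) set" where
  "Pos = (\<Inter>w. {x. axis w 1 \<bullet> x \<ge> 0})"

lemma pcone_Om: "pcone (Omega_minus r) \<subseteq> Pos"
  unfolding pcone_def
proof (rule closure_minimal, rule hull_minimal)
  show "insert 0 (Omega_minus r) \<subseteq> Pos"
    by (auto simp: Pos_def Omega_minus_def inner_axis_axis)
  show "convex Pos" unfolding Pos_def by (intro convex_INT convex_halfspace_ge)
  show "closed Pos" unfolding Pos_def by (intro closed_INT ballI closed_halfspace_ge)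
qed

lemma Om_image: "Omega_minus r = (\<lambda>w. axis w 1) ` {w. r w < 0}"
  by (auto simp: Omega_minus_def)

lemma hull_sub_pcone: "convex hull (insert 0 A) \<subseteq> pcone A"
  unfolding pcone_def by (rule closure_subset)

lemma Pos_iff: "x \<in> Pos \<longleftrightarrow> (\<forall>w. 0 \<le> x$w)"
  by (simp add: Pos_def comp_inner)

lemma pcone_Pos: assumes "\<forall>x\<in>A. \<forall>w. 0 \<le> x$w" shows "pcone A \<subseteq> Pos"
  unfolding pcone_def
proof (rule closure_minimal, rule hull_minimal)
  show "insert 0 A \<subseteq> Pos" using assms by (auto simp: Pos_iff)
  show "convex Pos" unfolding Pos_def by (intro convex_INT convex_halfspace_ge)
  show "closed Pos" unfolding Pos_def by (intro closed_INT ballI closed_halfspace_ge)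
qed

lemma Fset_eq: "Fset r = {x. (\<chi> w. 1) \<bullet> x = 1} \<inter> {x. (\<chi> w. r w) \<bullet> x = 0} \<inter> Pos"
  by (auto simp: Fset_def prob_simplex_def Pos_iff total_inner expect_inner)

lemma Fset_hull: "Fset r = convex hull (Eset r)"
proof -
  have cl: "closed (Fset r)" unfolding Fset_eq Pos_def
    by (intro closed_Int closed_INT closed_hyperplane ballI closed_halfspace_ge)
  have cv: "convex (Fset r)" unfolding Fset_eq Pos_def
    by (intro convex_Int convex_INT convex_hyperplane convex_halfspace_ge)
  have "\<forall>x\<in>Fset r. norm x \<le> 1"
  proof
    fix x assume "x \<in> Fset r"
    then have nn: "\<forall>w. 0 \<le> x$w" and t: "total x = 1" by (auto simp: Fset_def prob_simplex_def)
    have "norm x \<le> (\<Sum>i\<in>UNIV. \<bar>x$i\<bar>)" by (rule norm_le_l1_cart)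
    also have "\<dots> = total x" using nn by (simp add: total_def)
    finally show "norm x \<le> 1" using t by simp
  qed
  then have "bounded (Fset r)" by (auto simp: bounded_iff)
  then have "compact (Fset r)" using cl by (simp add: compact_eq_bounded_closed)
  then show ?thesis using cv Krein_Milman_Minkowski unfolding Eset_def by blast
qed

lemma expect_lin: "expect r (a + c *\<^sub>R b) = expect r a + c * expect r b"
  by (simp add: expect_inner inner_add_right)

lemma expect_diff: "expect r (a - b) = expect r a - expect r b"
  by (simp add: expect_inner inner_diff_right)

lemma total_diff: "total (a - b) = total a - total b"
  by (simp add: total_inner inner_diff_right)

lemma expect_scale: "expect r (c *\<^sub>R b) = c * expect r b"
  by (simp add: expect_inner)

lemma total_scale: "total (c *\<^sub>R b) = c * total b"
  by (simp add: total_inner)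

theorem lemma2:
  fixes r :: "'n::finite \<Rightarrow> real" and p :: "real^'n"
  assumes "p \<in> Jset r"
  shows "Sup {total \<pi>1 | \<pi>1 \<pi>2. \<pi>1 \<in> pcone (Eset r) \<and> \<pi>2 \<in> pcone (Omega_minus r) \<and> \<pi>1 + \<pi>2 = p}
       = Sup {total \<pi> | \<pi>. \<pi> \<in> pcone (range (\<lambda>w. axis w 1)) \<and> (\<forall>w. \<pi> $ w \<le> p $ w) \<and> expect r \<pi> \<ge> 0}"
  (is "Sup ?S1 = Sup ?S2")
proof -
  have pnn: "\<forall>w. 0 \<le> p$w" and pt: "total p = 1" and pe: "expect r p < 0"
    using assms by (auto simp: Jset_def prob_simplex_def)
  have B: "?S1 \<subseteq> ?S2"
  proof
    fix y assume "y \<in> ?S1"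
    then obtain \<pi>1 \<pi>2 where y: "y = total \<pi>1" and h1: "\<pi>1 \<in> pcone (Eset r)"
      and h2: "\<pi>2 \<in> pcone (Omega_minus r)" and hs: "\<pi>1 + \<pi>2 = p" by blast
    have g: "\<pi>1 \<in> Good r" using h1 pcone_E by blast
    have "\<pi>2 \<in> Pos" using h2 pcone_Om by blast
    then have le: "\<forall>w. \<pi>1 $ w \<le> p $ w" using hs by (auto simp: Pos_iff simp flip: hs)
    have "\<pi>1 \<in> convex hull (insert 0 ((\<lambda>w. axis w 1) ` UNIV))"
      by (rule in_hull_axes) (use g in \<open>auto simp: Good_iff\<close>)
    then have "\<pi>1 \<in> pcone (range (\<lambda>w. axis w 1))" using hull_sub_pcone by blast
    then show "y \<in> ?S2" using y le g by (auto simp: Good_iff)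
  qed
  have A: "\<exists>a\<in>?S1. b \<le> a" if "b \<in> ?S2" for b
  proof -
    from that obtain \<pi> where b: "b = total \<pi>" and h: "\<pi> \<in> pcone (range (\<lambda>w. axis w 1))"
      and le: "\<forall>w. \<pi> $ w \<le> p $ w" and ge: "expect r \<pi> \<ge> 0" by blast
    have "pcone (range (\<lambda>w. axis w 1)) \<subseteq> (Pos::(real^'n) set)"
      by (rule pcone_Pos) (auto simp: axis_def)
    then have "\<pi> \<in> Pos" using h by blast
    then have pinn: "\<forall>w. 0 \<le> \<pi>$w" by (simp add: Pos_iff)
    define \<sigma> where "\<sigma> = (\<chi> w. if r w < 0 then \<pi>$w else p$w)"
    have es: "expect r \<sigma> \<ge> expect r \<pi>"
      unfolding expect_def
    proof (rule sum_mono)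
      fix w
      show "\<pi> $ w * r w \<le> \<sigma> $ w * r w"
        using le[rule_format, of w] by (auto simp: \<sigma>_def intro: mult_right_mono)
    qed
    define l where "l = expect r \<sigma> / (expect r \<sigma> - expect r p)"
    have l0: "0 \<le> l" and l1: "l \<le> 1" using es ge pe unfolding l_def by (auto simp: field_simps)
    define \<pi>' where "\<pi>' = \<sigma> + l *\<^sub>R (p - \<sigma>)"
    have e0: "expect r \<pi>' = 0"
      unfolding \<pi>'_def expect_lin expect_diff l_def using es ge pe by (simp add: field_simps)
    have comp: "\<pi>'$w = \<sigma>$w + l * (p$w - \<sigma>$w)" for w by (simp add: \<pi>'_def)
    have sp: "\<sigma>$w \<le> p$w" for w using le by (simp add: \<sigma>_def)
    have ps: "\<pi>$w \<le> \<sigma>$w" for w using le by (simp add: \<sigma>_def)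
    have c1: "\<pi>$w \<le> \<pi>'$w" for w
      using ps[of w] sp[of w] l0 comp[of w] by (smt (verit) mult_nonneg_nonneg)
    have c2: "\<pi>'$w \<le> p$w" for w
      proof -
      have "l * (p$w - \<sigma>$w) \<le> p$w - \<sigma>$w"
        using sp[of w] l0 l1 by (intro mult_left_le_one_le) auto
      then show ?thesis using comp[of w] by linarith
    qed
    have c3: "r w \<ge> 0 \<Longrightarrow> \<pi>'$w = p$w" for w by (simp add: comp \<sigma>_def)
    have nn': "\<forall>w. 0 \<le> \<pi>'$w" using c1 pinn by (meson order_trans)
    have tle: "total \<pi> \<le> total \<pi>'" unfolding total_def by (rule sum_mono) (use c1 in auto)
    define t where "t = total \<pi>'"
    have "total \<pi>' \<le> total p" unfolding total_def by (rule sum_mono) (use c2 in auto)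
    then have t1: "t \<le> 1" unfolding t_def using pt by simp
    have t0: "0 \<le> t" unfolding t_def total_def using nn' by (simp add: sum_nonneg)
    have in1: "\<pi>' \<in> pcone (Eset r)"
    proof (cases "t = 0")
      case True
      then have "\<forall>w\<in>UNIV. \<pi>'$w = 0" using nn' unfolding t_def total_def
        by (simp add: sum_nonneg_eq_0_iff)
      then have "\<pi>' = 0" by (simp add: vec_eq_iff)
      then show ?thesis using hull_sub_pcone[of "Eset r"] by (auto simp: hull_inc)
    next
      case False
      then have tp: "t > 0" using t0 by simp
      define q where "q = (1/t) *\<^sub>R \<pi>'"
      have "q \<in> Fset r"
        using tp nn' e0 unfolding Fset_def prob_simplex_def q_def
        by (auto simp: expect_scale total_scale t_def)
      then have "q \<in> convex hull (insert 0 (Eset r))"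
        using Fset_hull hull_mono[of "Eset r" "insert 0 (Eset r)"] by blast
      then have "t *\<^sub>R q + (1 - t) *\<^sub>R 0 \<in> convex hull (insert 0 (Eset r))"
        using t0 t1 by (intro convexD[OF convex_convex_hull]) (auto simp: hull_inc)
      moreover have "t *\<^sub>R q + (1 - t) *\<^sub>R 0 = \<pi>'" using tp by (simp add: q_def)
      ultimately show ?thesis using hull_sub_pcone by auto
    qed
    have "p - \<pi>' \<in> convex hull (insert 0 ((\<lambda>w. axis w 1) ` {w. r w < 0}))"
    proof (rule in_hull_axes)
      show "\<forall>w. 0 \<le> (p - \<pi>') $ w" using c2 by simp
      show "\<forall>w. w \<notin> {w. r w < 0} \<longrightarrow> (p - \<pi>') $ w = 0" using c3 by simp
      show "total (p - \<pi>') \<le> 1" using t0 pt by (simp add: total_diff t_def)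
    qed
    then have in2: "p - \<pi>' \<in> pcone (Omega_minus r)" using hull_sub_pcone[of "Omega_minus r"] unfolding Om_image by blast
    have "\<pi>' + (p - \<pi>') = p" by simp
    then have "total \<pi>' \<in> ?S1" using in1 in2 by blast
    then show ?thesis using tle b by blast
  qed
  have z: "0 \<in> ?S2"
  proof -
    have "(0::real^'n) \<in> convex hull (insert 0 (range (\<lambda>w. axis w 1)))" by (simp add: hull_inc)
    then have "(0::real^'n) \<in> pcone (range (\<lambda>w. axis w 1))" using hull_sub_pcone by blast
    then have "(0::real^'n) \<in> pcone (range (\<lambda>w. axis w 1)) \<and> (\<forall>w. (0::real^'n) $ w \<le> p $ w) \<and> expect r 0 \<ge> 0"
      using pnn by (simp add: expect_def)
    moreover have "total (0::real^'n) = 0" by (simp add: total_def)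
    ultimately show ?thesis by (smt (verit) mem_Collect_eq)
  qed
  have bd2: "bdd_above ?S2"
  proof (rule bdd_aboveI)
    fix x assume "x \<in> ?S2"
    then obtain \<pi> where "x = total \<pi>" "\<forall>w. \<pi> $ w \<le> p $ w" by blast
    moreover have "total \<pi> \<le> total p" unfolding total_def by (rule sum_mono) (use \<open>\<forall>w. \<pi> $ w \<le> p $ w\<close> in auto)
    ultimately show "x \<le> 1" using pt by simp
  qed
  have bd1: "bdd_above ?S1" using bdd_above_mono[OF bd2 B] .
  have ne2: "?S2 \<noteq> {}" using z by blast
  then have ne1: "?S1 \<noteq> {}" using A by blast
  show ?thesis
  proof (rule antisym)
    show "Sup ?S1 \<le> Sup ?S2" by (rule cSup_subset_mono[OF ne1 bd2 B])
    show "Sup ?S2 \<le> Sup ?S1" by (rule cSup_mono[OF ne2 bd1 A])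
  qed
qed

end
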